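(* Let $q\ge2$, let $n_i\to\infty$, let $(R_i)$ be reals with $R_i\to\infty$, and let $(l_i)$ be positive integers such that $l_i\le\beta n_i$ for all $i$, for some constant $\beta>0$. For each $i$ let $\mathcal C_i$ be an $l_i$-shot ID code for $\Pi^q_{n_i}$ with $M_i\ge 2^{R_i n_i^{l_i(q-1)}}$ messages and type-I and type-II error probabilities $\lambda_{1,i},\lambda_{2,i}$. Then $\liminf_{i\to\infty}(\lambda_{1,i}+\lambda_{2,i})\ge1$.
   Context: Fix an integer $q\ge 2$ and let $\mathcal A_q=\{1,\dots,q\}$. For $n\ge1$ and $\sigma\in S_n$ (the symmetric group on $\{1,\dots,n\}$), $\sigma\mathbf x=(x_{\sigma^{-1}(1)},\dots,x_{\sigma^{-1}(n)})$ for $\mathbf x\in\mathcal A_q^n$. The $n$-block $q$-ary uniform permutation channel $\Pi^q_n$ has input/output alphabet $\mathcal A_q^n$ and $\Pi^q_n(\mathbf y\mid\mathbf x)=\frac1{n!}\sum_{\sigma\in S_n}\mathbf 1\{\mathbf y=\sigma\mathbf x\}$. Using it $l$ times (independently on each block) gives the channel $W^{(l)}$ on $(\mathcal A_q^n)^l$ with $W^{(l)}(\mathbf y^{(1)},\dots,\mathbf y^{(l)}\mid \mathbf x^{(1)},\dots,\mathbf x^{(l)})=\prod_{s=1}^l\Pi^q_n(\mathbf y^{(s)}\mid\mathbf x^{(s)})$. An $l$-shot ID code with $M$ messages for $\Pi^q_n$ (an "$(n,l,M,\lambda_1,\lambda_2)$ ID code") is a family $\{(Q_i,\mathcal D_i)\}_{i=1}^M$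 with $Q_i$ a probability distribution on $(\mathcal A_q^n)^l$ and $\mathcal D_i\subseteq(\mathcal A_q^n)^l$; its error probabilities are $\lambda_{i\to j}=\sum_{\underline{\mathbf x}}Q_i(\underline{\mathbf x})\sum_{\underline{\mathbf y}\in\mathcal D_j}W^{(l)}(\underline{\mathbf y}\mid\underline{\mathbf x})$ ($i\neq j$), $\lambda_{i\not\to i}=\sum_{\underline{\mathbf x}}Q_i(\underline{\mathbf x})\sum_{\underline{\mathbf y}\notin\mathcal D_i}W^{(l)}(\underline{\mathbf y}\mid\underline{\mathbf x})$, type-I error probability $\lambda_1=\max_i\lambda_{i\not\to i}$, type-II error probability $\lambda_2=\max_{i\ne j}\lambda_{i\to j}$. *)

theory Defs
  imports "HOL-Probability.Probability" "HOL-Combinatorics.Permutations"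
begin

definition words :: "nat \<Rightarrow> nat \<Rightarrow> nat list set" where
  "words q n = {x. length x = n \<and> set x \<subseteq> {1..q}}"

definition blocks :: "nat \<Rightarrow> nat \<Rightarrow> nat \<Rightarrow> nat list list set" where
  "blocks q n l = {xs. length xs = l \<and> (\<forall>s<l. xs ! s \<in> words q n)}"

definition perm_act :: "(nat \<Rightarrow> nat) \<Rightarrow> nat list \<Rightarrow> nat list" where
  "perm_act \<sigma> x = permute_list (inv \<sigma>) x"

definition perm_channel :: "nat \<Rightarrow> nat list \<Rightarrow> nat list \<Rightarrow> real" where
  "perm_channel n y x =
     (\<Sum>\<sigma>\<in>{\<sigma>. \<sigma> permutes {..<n}}. if y = perm_act \<sigma> x then 1 else 0) / fact n"

definition W_l :: "nat \<Rightarrow> nat \<Rightarrow> nat list list \<Rightarrow> nat list list \<Rightarrow> real" where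
  "W_l n l ys xs = (\<Prod>s<l. perm_channel n (ys ! s) (xs ! s))"

definition is_ID_code :: "nat \<Rightarrow> nat \<Rightarrow> nat \<Rightarrow> nat \<Rightarrow>
    (nat \<Rightarrow> nat list list pmf) \<Rightarrow> (nat \<Rightarrow> nat list list set) \<Rightarrow> bool" where
  "is_ID_code q n l M Q D \<longleftrightarrow>
     (\<forall>i<M. set_pmf (Q i) \<subseteq> blocks q n l \<and> D i \<subseteq> blocks q n l)"

definition err_to :: "nat \<Rightarrow> nat \<Rightarrow> nat \<Rightarrow>
    (nat \<Rightarrow> nat list list pmf) \<Rightarrow> (nat \<Rightarrow> nat list list set) \<Rightarrow> nat \<Rightarrow> nat \<Rightarrow> real" where
  "err_to q n l Q D i j =
     measure_pmf.expectation (Q i) (\<lambda>xs. \<Sum>ys\<in>D j. W_l n l ys xs)"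

definition err_miss :: "nat \<Rightarrow> nat \<Rightarrow> nat \<Rightarrow>
    (nat \<Rightarrow> nat list list pmf) \<Rightarrow> (nat \<Rightarrow> nat list list set) \<Rightarrow> nat \<Rightarrow> real" where
  "err_miss q n l Q D i =
     measure_pmf.expectation (Q i) (\<lambda>xs. \<Sum>ys\<in>blocks q n l - D i. W_l n l ys xs)"

(* type-I error: max_i lambda_{i -/-> i}  (errors are nonnegative; 0 is inserted only
   to make the maximum well defined in degenerate cases) *)
definition lambda1 :: "nat \<Rightarrow> nat \<Rightarrow> nat \<Rightarrow> nat \<Rightarrow>
    (nat \<Rightarrow> nat list list pmf) \<Rightarrow> (nat \<Rightarrow> nat list list set) \<Rightarrow> real" where
  "lambda1 q n l M Q D = Max (insert 0 {err_miss q n l Q D i | i. i < M})"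

definition lambda2 :: "nat \<Rightarrow> nat \<Rightarrow> nat \<Rightarrow> nat \<Rightarrow>
    (nat \<Rightarrow> nat list list pmf) \<Rightarrow> (nat \<Rightarrow> nat list list set) \<Rightarrow> real" where
  "lambda2 q n l M Q D =
     Max (insert 0 {err_to q n l Q D i j | i j. i < M \<and> j < M \<and> i \<noteq> j})"

end

theory Submission
  imports Defs
begin

lemma perm_act_compose:
  assumes "p permutes {..<length x}" "\<sigma> permutes {..<length x}"
  shows "perm_act \<sigma> (permute_list p x) = perm_act (\<sigma> \<circ> inv p) x"
proof -
  have bs: "bij \<sigma>" "bij p" using assms permutes_bij by auto
  have "inv (\<sigma> \<circ> inv p) = p \<circ> inv \<sigma>"
    using bs by (simp add: o_inv_distrib bij_imp_bij_inv inv_inv_eq)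
  moreover have "permute_list (inv \<sigma>) (permute_list p x) = permute_list (p \<circ> inv \<sigma>) x"
    using permute_list_compose[of "inv \<sigma>" x p] permutes_inv[OF assms(2)] by simp
  ultimately show ?thesis unfolding perm_act_def by simp
qed

lemma perm_channel_mset:
  assumes "length x = n" "mset x' = mset x"
  shows "perm_channel n y x' = perm_channel n y x"
proof -
  obtain p where p: "p permutes {..<length x}" "permute_list p x = x'"
    using mset_eq_permutation[OF assms(2)] by metis
  let ?P = "{\<sigma>. \<sigma> permutes {..<n}}"
  have bij: "bij_betw (\<lambda>\<sigma>. \<sigma> \<circ> inv p) ?P ?P"
  proof (rule bij_betw_byWitness[where f' = "\<lambda>\<sigma>. \<sigma> \<circ> p"])
    show "\<forall>a\<in>?P. a \<circ> inv p \<circ> p = a" using p assms(1)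
      by (auto simp: o_assoc[symmetric] permutes_inv_o)
    show "\<forall>a\<in>?P. a \<circ> p \<circ> inv p = a" using p assms(1)
      by (auto simp: o_assoc[symmetric] permutes_inv_o)
    show "(\<lambda>\<sigma>. \<sigma> \<circ> inv p) ` ?P \<subseteq> ?P" using p assms(1)
      by (auto intro: permutes_compose permutes_inv)
    show "(\<lambda>\<sigma>. \<sigma> \<circ> p) ` ?P \<subseteq> ?P" using p assms(1)
      by (auto intro: permutes_compose permutes_inv)
  qed
  have "(\<Sum>\<sigma>\<in>?P. if y = perm_act \<sigma> x' then 1 else 0 :: real)
      = (\<Sum>\<sigma>\<in>?P. if y = perm_act (\<sigma> \<circ> inv p) x then 1 else 0)"
    using p assms(1) by (intro sum.cong) (auto simp: perm_act_compose)
  also have "\<dots> = (\<Sum>\<sigma>\<in>?P. if y = perm_act \<sigma> x then 1 else 0)"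
    using sum.reindex_bij_betw[OF bij, of "\<lambda>\<sigma>. if y = perm_act \<sigma> x then 1 else (0::real)"] .
  finally show ?thesis unfolding perm_channel_def by simp
qed

lemma perm_channel_nonneg: "perm_channel n y x \<ge> 0"
  unfolding perm_channel_def by (auto intro!: sum_nonneg divide_nonneg_nonneg)

lemma finite_words: "finite (words q n)"
proof -
  have "words q n = {x. set x \<subseteq> {1..q} \<and> length x = n}" unfolding words_def by auto
  then show ?thesis using finite_lists_length_eq[of "{1..q}" n] by simp
qed

lemma sum_perm_channel:
  assumes "x \<in> words q n"
  shows "(\<Sum>y\<in>words q n. perm_channel n y x) = 1"
proof -
  let ?P = "{\<sigma>. \<sigma> permutes {..<n}}"
  have len: "length x = n" using assms by (auto simp: words_def)
  have inw: "perm_act \<sigma> x \<in> words q n" if "\<sigma> \<in> ?P" for \<sigma>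
  proof -
    have "inv \<sigma> permutes {..<length x}" using that len permutes_inv by auto
    then show ?thesis using assms unfolding perm_act_def words_def by auto
  qed
  have "(\<Sum>y\<in>words q n. perm_channel n y x)
     = (\<Sum>y\<in>words q n. \<Sum>\<sigma>\<in>?P. if y = perm_act \<sigma> x then 1 else 0) / fact n"
    unfolding perm_channel_def by (simp add: sum_divide_distrib)
  also have "\<dots> = (\<Sum>\<sigma>\<in>?P. \<Sum>y\<in>words q n. if y = perm_act \<sigma> x then 1 else 0) / fact n"
    by (subst sum.swap) simp
  also have "\<dots> = (\<Sum>\<sigma>\<in>?P. 1::real) / fact n"
    using inw finite_words[of q n] by (intro arg_cong2[where f="(/)"] sum.cong refl) (auto simp: sum.delta)
  also have "\<dots> = 1" using card_permutations[of "{..<n}" n] by simp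
  finally show ?thesis .
qed


lemma sum_lists_prod:
  fixes f :: "nat \<Rightarrow> 'a \<Rightarrow> real"
  assumes "finite A"
  shows "(\<Sum>ys\<in>{ys. length ys = l \<and> (\<forall>s<l. ys!s \<in> A)}. \<Prod>s<l. f s (ys!s)) = (\<Prod>s<l. \<Sum>y\<in>A. f s y)"
proof -
  let ?B = "{ys. length ys = l \<and> (\<forall>s<l. ys!s \<in> A)}"
  let ?P = "PiE {..<l} (\<lambda>_. A)"
  have bij: "bij_betw (\<lambda>g. map g [0..<l]) ?P ?B"
  proof (rule bij_betw_byWitness[where f' = "\<lambda>ys. restrict (nth ys) {..<l}"])
    show "\<forall>a\<in>?P. restrict (nth (map a [0..<l])) {..<l} = a"
    proof
      fix a assume a: "a \<in> ?P"
      show "restrict (nth (map a [0..<l])) {..<l} = a"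
      proof (rule ext)
        fix x show "restrict (nth (map a [0..<l])) {..<l} x = a x"
          using PiE_arb[OF a, of x] by (cases "x < l") auto
      qed
    qed
    show "\<forall>a\<in>?B. map (restrict (nth a) {..<l}) [0..<l] = a"
      by (auto intro!: nth_equalityI)
    show "(\<lambda>g. map g [0..<l]) ` ?P \<subseteq> ?B"
    proof
      fix ys assume "ys \<in> (\<lambda>g. map g [0..<l]) ` ?P"
      then obtain g where g: "g \<in> ?P" "ys = map g [0..<l]" by blast
      then show "ys \<in> ?B" using PiE_mem[OF g(1)] by auto
    qed
    show "(\<lambda>ys. restrict (nth ys) {..<l}) ` ?B \<subseteq> ?P"
    proof
      fix h assume "h \<in> (\<lambda>ys. restrict (nth ys) {..<l}) ` ?B"
      then obtain ys where ys: "ys \<in> ?B" "h = restrict (nth ys) {..<l}" by blast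
      show "h \<in> ?P" unfolding ys(2) restrict_PiE_iff using ys(1) by blast
    qed
  qed
  have "(\<Prod>s<l. \<Sum>y\<in>A. f s y) = (\<Sum>g\<in>?P. \<Prod>s<l. f s (g s))"
    using prod_sum_PiE[of "{..<l}" "\<lambda>_. A" f] assms by simp
  also have "\<dots> = (\<Sum>g\<in>?P. \<Prod>s<l. f s (map g [0..<l] ! s))"
    by (intro sum.cong prod.cong) auto
  also have "\<dots> = (\<Sum>ys\<in>?B. \<Prod>s<l. f s (ys!s))"
    using sum.reindex_bij_betw[OF bij, of "\<lambda>ys. \<Prod>s<l. f s (ys!s)"] .
  finally show ?thesis by simp
qed

lemma finite_blocks: "finite (blocks q n l)"
proof -
  have "blocks q n l \<subseteq> {xs. set xs \<subseteq> words q n \<and> length xs = l}"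
    unfolding blocks_def by (auto simp: in_set_conv_nth)
  then show ?thesis using finite_lists_length_eq[OF finite_words] by (rule finite_subset)
qed

lemma sum_W_l:
  assumes "xs \<in> blocks q n l"
  shows "(\<Sum>ys\<in>blocks q n l. W_l n l ys xs) = 1"
proof -
  have "(\<Sum>ys\<in>blocks q n l. W_l n l ys xs) = (\<Prod>s<l. \<Sum>y\<in>words q n. perm_channel n y (xs!s))"
    unfolding W_l_def blocks_def using sum_lists_prod[OF finite_words, where l=l and f="\<lambda>s y. perm_channel n y (xs!s)"]
    by simp
  also have "\<dots> = 1" using assms by (auto simp: blocks_def sum_perm_channel)
  finally show ?thesis .
qed

lemma W_l_nonneg: "W_l n l ys xs \<ge> 0"
  unfolding W_l_def by (auto intro!: prod_nonneg perm_channel_nonneg)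

lemma W_l_mset:
  assumes "xs \<in> blocks q n l" "xs' \<in> blocks q n l" "map mset xs = map mset xs'"
  shows "W_l n l ys xs = W_l n l ys xs'"
proof -
  have "perm_channel n (ys!s) (xs!s) = perm_channel n (ys!s) (xs'!s)" if "s < l" for s
  proof -
    have "length (xs'!s) = n" using assms that by (auto simp: blocks_def words_def)
    moreover have "mset (xs!s) = mset (xs'!s)"
    proof -
      have "map mset xs ! s = map mset xs' ! s" using assms(3) by simp
      moreover have "s < length xs" "s < length xs'" using assms that by (auto simp: blocks_def)
      ultimately show ?thesis by simp
    qed
    ultimately show ?thesis by (rule perm_channel_mset)
  qed
  then show ?thesis unfolding W_l_def by (intro prod.cong) auto
qed


lemma words_mset_inj:
  assumes "q \<ge> 1" "x \<in> words q n" "x' \<in> words q n"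
    and "map (count (mset x)) [1..<q] = map (count (mset x')) [1..<q]"
  shows "mset x = mset x'"
proof (rule multiset_eqI)
  fix k
  have lo: "count (mset x) k = count (mset x') k" if "k \<in> {1..<q}" for k
  proof -
    have "map (count (mset x)) [1..<q] ! (k - 1) = map (count (mset x')) [1..<q] ! (k - 1)"
      by (rule arg_cong[OF assms(4)])
    then show ?thesis using that by auto
  qed
  have sx: "(\<Sum>k\<in>{1..q}. count_list x k) = n" "(\<Sum>k\<in>{1..q}. count_list x' k) = n"
    using assms(2,3) sum_count_set[of x "{1..q}"] sum_count_set[of x' "{1..q}"]
    by (auto simp: words_def)
  have ins: "{1..q} = insert q {1..<q}" using assms(1) by auto
  have "count_list x q + (\<Sum>k\<in>{1..<q}. count_list x k) = n"
    using sx(1) unfolding ins by simp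
  moreover have "count_list x' q + (\<Sum>k\<in>{1..<q}. count_list x' k) = n"
    using sx(2) unfolding ins by simp
  moreover have "(\<Sum>k\<in>{1..<q}. count_list x k) = (\<Sum>k\<in>{1..<q}. count_list x' k)"
    using lo by (intro sum.cong) (auto simp: count_mset)
  ultimately have hq: "count (mset x) q = count (mset x') q" by (simp add: count_mset)
  show "count (mset x) k = count (mset x') k"
  proof (cases "k \<in> {1..q}")
    case True
    then show ?thesis using lo hq by (cases "k = q") auto
  next
    case False
    then have "k \<notin> set x" "k \<notin> set x'" using assms(2,3) by (auto simp: words_def)
    then show ?thesis by (metis count_mset_0_iff)
  qed
qed

lemma card_mset_words:
  assumes "q \<ge> 1"
  shows "card (mset ` words q n) \<le> (n+1)^(q-1)"
proof -
  let ?g = "\<lambda>M. map (count M) [1..<q]"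
  let ?L = "{xs. set xs \<subseteq> {0..n} \<and> length xs = q - 1}"
  have inj: "inj_on ?g (mset ` words q n)"
    using words_mset_inj[OF assms] by (auto simp: inj_on_def)
  have sub: "?g ` mset ` words q n \<subseteq> ?L"
  proof
    fix v assume "v \<in> ?g ` mset ` words q n"
    then obtain x where x: "x \<in> words q n" "v = ?g (mset x)" by blast
    have "count (mset x) k \<le> n" for k
      using count_le_size[of "mset x" k] x(1) by (auto simp: words_def)
    then show "v \<in> ?L" using x(2) by auto
  qed
  have "card (mset ` words q n) = card (?g ` mset ` words q n)"
    using card_image[OF inj] by simp
  also have "\<dots> \<le> card ?L" by (rule card_mono[OF _ sub]) (simp add: finite_lists_length_eq)
  also have "\<dots> = (n+1)^(q-1)" by (simp add: card_lists_length_eq)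
  finally show ?thesis .
qed

lemma card_types:
  assumes "q \<ge> 1"
  shows "card (map mset ` blocks q n l) \<le> (n+1)^(l*(q-1))"
proof -
  let ?S = "mset ` words q n"
  have sub: "map mset ` blocks q n l \<subseteq> {ms. set ms \<subseteq> ?S \<and> length ms = l}"
    by (auto simp: blocks_def in_set_conv_nth)
  have fS: "finite ?S" using finite_words by simp
  have "card (map mset ` blocks q n l) \<le> card {ms. set ms \<subseteq> ?S \<and> length ms = l}"
    by (rule card_mono[OF _ sub]) (simp add: finite_lists_length_eq[OF fS])
  also have "\<dots> = card ?S ^ l" by (simp add: card_lists_length_eq[OF fS])
  also have "\<dots> \<le> ((n+1)^(q-1))^l" by (rule power_mono[OF card_mset_words[OF assms]]) simp
  also have "\<dots> = (n+1)^(l*(q-1))" by (simp add: power_mult[symmetric] mult.commute)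
  finally show ?thesis .
qed


lemma expectation_fin:
  fixes f :: "'a \<Rightarrow> real"
  assumes "finite B" "set_pmf Q \<subseteq> B"
  shows "measure_pmf.expectation Q f = (\<Sum>x\<in>B. pmf Q x * f x)"
  using integral_measure_pmf[OF assms(1), of Q f] assms(2) by auto

lemma floor_close:
  fixes x y :: real and K :: nat
  assumes "x \<ge> 0" "y \<ge> 0" "K > 0" "nat \<lfloor>K * x\<rfloor> = nat \<lfloor>K * y\<rfloor>"
  shows "\<bar>x - y\<bar> \<le> 1 / K"
proof -
  have "\<lfloor>K * x\<rfloor> = \<lfloor>K * y\<rfloor>" using assms by (simp add: nat_eq_iff2)
  then have "\<bar>K * x - K * y\<bar> < 1"
  proof -
    assume e: "\<lfloor>K * x\<rfloor> = \<lfloor>K * y\<rfloor>"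
    have "of_int \<lfloor>K * x\<rfloor> \<le> K * x" "K * x < of_int \<lfloor>K * x\<rfloor> + 1"
      "of_int \<lfloor>K * y\<rfloor> \<le> K * y" "K * y < of_int \<lfloor>K * y\<rfloor> + 1"
      by linarith+
    then show ?thesis unfolding e by linarith
  qed
  then have "K * \<bar>x - y\<bar> < 1" by (simp add: abs_mult right_diff_distrib[symmetric])
  then show ?thesis using assms(3) by (simp add: field_simps)
qed

lemma card_small_msets:
  assumes "finite T"
  shows "card {m. set_mset m \<subseteq> T \<and> size m \<le> K} \<le> 2 ^ (card T + 2 * K)"
proof -
  have eq: "{m. set_mset m \<subseteq> T \<and> size m \<le> K} = (\<Union>k\<in>{..K}. multisets_of_size T k)"
    by (auto simp: multisets_of_size_def)
  have "card {m. set_mset m \<subseteq> T \<and> size m \<le> K} \<le> (\<Sum>k\<le>K. card (multisets_of_size T k))"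
    unfolding eq by (rule card_UN_le) simp
  also have "\<dots> \<le> (\<Sum>k\<le>K. 2 ^ (card T + K))"
  proof (rule sum_mono)
    fix k assume "k \<in> {..K}"
    then have "card (multisets_of_size T k) \<le> 2 ^ (card T + k - 1)"
      using card_multisets_of_size[OF assms, of k] binomial_le_pow2 by simp
    also have "\<dots> \<le> 2 ^ (card T + K)" using \<open>k \<in> {..K}\<close> by (intro power_increasing) auto
    finally show "card (multisets_of_size T k) \<le> 2 ^ (card T + K)" .
  qed
  also have "\<dots> = (K + 1) * 2 ^ (card T + K)" by simp
  also have "\<dots> \<le> 2 ^ K * 2 ^ (card T + K)"
  proof -
    have "K + 1 \<le> 2 ^ K" by (induction K) auto
    then show ?thesis by (rule mult_right_mono) simp
  qed
  also have "\<dots> = 2 ^ (card T + 2 * K)" by (simp add: power_add[symmetric])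
  finally show ?thesis .
qed


lemma lambda1_ge:
  assumes "i < M" shows "err_miss q n l Q D i \<le> lambda1 q n l M Q D"
proof -
  have "{err_miss q n l Q D i | i. i < M} = (\<lambda>i. err_miss q n l Q D i) ` {..<M}" by auto
  then have f: "finite (insert 0 {err_miss q n l Q D i | i. i < M})" by simp
  show ?thesis unfolding lambda1_def by (rule Max_ge[OF f]) (use assms in blast)
qed

lemma lambda2_ge:
  assumes "i < M" "j < M" "i \<noteq> j" shows "err_to q n l Q D i j \<le> lambda2 q n l M Q D"
proof -
  have "{err_to q n l Q D i j | i j. i < M \<and> j < M \<and> i \<noteq> j}
      \<subseteq> (\<lambda>(i,j). err_to q n l Q D i j) ` ({..<M} \<times> {..<M})" by auto
  then have "finite {err_to q n l Q D i j | i j. i < M \<and> j < M \<and> i \<noteq> j}"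
    by (rule finite_subset) simp
  then have f: "finite (insert 0 {err_to q n l Q D i j | i j. i < M \<and> j < M \<and> i \<noteq> j})"
    by simp
  show ?thesis unfolding lambda2_def by (rule Max_ge[OF f]) (use assms in blast)
qed

lemma main_fin:
  fixes Q :: "nat \<Rightarrow> nat list list pmf" and D :: "nat \<Rightarrow> nat list list set" and K N :: nat
  assumes q: "q \<ge> 1" and code: "is_ID_code q n l M Q D" and K: "K > 0"
    and big: "M > 2 ^ (N + 2*K)" and N: "(n+1)^(l*(q-1)) \<le> N"
  shows "lambda1 q n l M Q D + lambda2 q n l M Q D \<ge> 1 - real N / real K"
proof -
  define B where "B = blocks q n l"
  define T where "T = map mset ` B"
  have fB: "finite B" using finite_blocks B_def by simp
  have fT: "finite T" using fB T_def by simp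
  have cT: "card T \<le> N" using card_types[OF q, of n l] N T_def B_def by simp
  define p where "p i t = (\<Sum>xs\<in>{xs\<in>B. map mset xs = t}. pmf (Q i) xs)" for i t
  define v where "v i = (\<Sum>t\<in>T. replicate_mset (nat \<lfloor>real K * p i t\<rfloor>) t)" for i
  have supp: "set_pmf (Q i) \<subseteq> B" and DB: "D i \<subseteq> B" if "i < M" for i
    using code that unfolding is_ID_code_def B_def by auto
  have p_nonneg: "p i t \<ge> 0" for i t unfolding p_def by (auto intro: sum_nonneg)
  have p_sum: "(\<Sum>t\<in>T. p i t) = 1" if "i < M" for i
  proof -
    have "(\<Sum>t\<in>T. p i t) = (\<Sum>xs\<in>B. pmf (Q i) xs)"
      unfolding p_def T_def using sum.image_gen[OF fB, of "pmf (Q i)" "map mset"] by simp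
    also have "\<dots> = 1" using sum_pmf_eq_1[OF fB supp[OF that]] .
    finally show ?thesis .
  qed
  have count_v: "count (v i) t = (if t \<in> T then nat \<lfloor>real K * p i t\<rfloor> else 0)" for i t
    unfolding v_def count_sum by (simp add: count_replicate_mset fT sum.delta')
  have set_v: "set_mset (v i) \<subseteq> T" for i
  proof
    fix t assume "t \<in># v i"
    then have "count (v i) t > 0" by simp
    then show "t \<in> T" using count_v[of i t] by (auto split: if_splits)
  qed
  have size_v: "size (v i) \<le> K" if "i < M" for i
  proof -
    have "real (size (v i)) = (\<Sum>t\<in>T. real (nat \<lfloor>real K * p i t\<rfloor>))"
      unfolding v_def by simp
    also have "\<dots> \<le> (\<Sum>t\<in>T. real K * p i t)"
    proof (rule sum_mono)
      fix t
      have "0 \<le> real K * p i t" using p_nonneg by simp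
      then show "real (nat \<lfloor>real K * p i t\<rfloor>) \<le> real K * p i t" by linarith
    qed
    also have "\<dots> = real K" using p_sum[OF that] by (simp add: sum_distrib_left[symmetric])
    finally show ?thesis by simp
  qed
  let ?S = "{m. set_mset m \<subseteq> T \<and> size m \<le> K}"
  have vS: "v ` {..<M} \<subseteq> ?S" using set_v size_v by auto
  have fS: "finite ?S"
  proof -
    have "?S = (\<Union>k\<in>{..K}. multisets_of_size T k)" by (auto simp: multisets_of_size_def)
    then show ?thesis using finite_multisets_of_size[OF fT] by simp
  qed
  have "card ?S \<le> 2 ^ (card T + 2 * K)" by (rule card_small_msets[OF fT])
  also have "\<dots> \<le> 2 ^ (N + 2 * K)" using cT by (intro power_increasing) auto
  finally have cS: "card ?S < M" using big by simp
  have "\<not> inj_on v {..<M}"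
  proof
    assume "inj_on v {..<M}"
    then have "card (v ` {..<M}) = M" by (simp add: card_image)
    moreover have "card (v ` {..<M}) \<le> card ?S" by (rule card_mono[OF fS vS])
    ultimately show False using cS by simp
  qed
  then obtain i j where ij: "i < M" "j < M" "i \<noteq> j" "v i = v j"
    unfolding inj_on_def by auto
  have close: "\<bar>p i t - p j t\<bar> \<le> 1 / real K" if "t \<in> T" for t
  proof -
    have "nat \<lfloor>real K * p i t\<rfloor> = nat \<lfloor>real K * p j t\<rfloor>"
      using count_v[of i t] count_v[of j t] ij(4) that by simp
    then show ?thesis by (rule floor_close[OF p_nonneg p_nonneg K])
  qed
  define h where "h xs = (\<Sum>ys\<in>D i. W_l n l ys xs)" for xs
  define rep where "rep t = (SOME xs. xs \<in> B \<and> map mset xs = t)" for t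
  define g where "g t = h (rep t)" for t
  have rep: "rep t \<in> B \<and> map mset (rep t) = t" if "t \<in> T" for t
    unfolding rep_def by (rule someI_ex) (use that T_def in auto)
  have hg: "h xs = g (map mset xs)" if "xs \<in> B" for xs
  proof -
    have r: "rep (map mset xs) \<in> B" "map mset (rep (map mset xs)) = map mset xs"
      using rep[of "map mset xs"] that T_def by auto
    show ?thesis unfolding g_def h_def
      by (intro sum.cong refl W_l_mset[of xs q n l "rep (map mset xs)"])
        (use r that B_def in auto)
  qed
  have g01: "0 \<le> g t \<and> g t \<le> 1" if "t \<in> T" for t
  proof -
    have rB: "rep t \<in> B" using rep[OF that] by simp
    have "g t \<le> (\<Sum>ys\<in>B. W_l n l ys (rep t))"
      unfolding g_def h_def by (rule sum_mono2[OF fB DB[OF ij(1)]]) (simp add: W_l_nonneg)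
    also have "\<dots> = 1" using sum_W_l rB B_def by simp
    finally show ?thesis unfolding g_def h_def by (auto intro: sum_nonneg W_l_nonneg)
  qed
  have Eh: "(\<Sum>xs\<in>B. pmf (Q a) xs * h xs) = (\<Sum>t\<in>T. p a t * g t)" for a
  proof -
    have "(\<Sum>xs\<in>B. pmf (Q a) xs * h xs) = (\<Sum>xs\<in>B. pmf (Q a) xs * g (map mset xs))"
      using hg by simp
    also have "\<dots> = (\<Sum>t\<in>T. \<Sum>xs\<in>{xs\<in>B. map mset xs = t}. pmf (Q a) xs * g (map mset xs))"
      unfolding T_def by (rule sum.image_gen[OF fB])
    also have "\<dots> = (\<Sum>t\<in>T. \<Sum>xs\<in>{xs\<in>B. map mset xs = t}. pmf (Q a) xs * g t)"
      by (intro sum.cong refl) auto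
    also have "\<dots> = (\<Sum>t\<in>T. p a t * g t)" unfolding p_def by (simp add: sum_distrib_right)
    finally show ?thesis .
  qed
  have miss: "err_miss q n l Q D i = 1 - (\<Sum>xs\<in>B. pmf (Q i) xs * h xs)"
  proof -
    have "err_miss q n l Q D i = (\<Sum>xs\<in>B. pmf (Q i) xs * (\<Sum>ys\<in>B - D i. W_l n l ys xs))"
      unfolding err_miss_def B_def[symmetric] by (rule expectation_fin[OF fB supp[OF ij(1)]])
    also have "\<dots> = (\<Sum>xs\<in>B. pmf (Q i) xs * (1 - h xs))"
    proof (intro sum.cong refl)
      fix xs assume "xs \<in> B"
      have "(\<Sum>ys\<in>B - D i. W_l n l ys xs) = (\<Sum>ys\<in>B. W_l n l ys xs) - h xs"
        unfolding h_def using sum_diff[OF fB DB[OF ij(1)]] by simp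
      also have "\<dots> = 1 - h xs" using sum_W_l \<open>xs \<in> B\<close> B_def by simp
      finally show "pmf (Q i) xs * (\<Sum>ys\<in>B - D i. W_l n l ys xs) = pmf (Q i) xs * (1 - h xs)" by simp
    qed
    also have "\<dots> = (\<Sum>xs\<in>B. pmf (Q i) xs) - (\<Sum>xs\<in>B. pmf (Q i) xs * h xs)"
      by (simp add: right_diff_distrib sum_subtractf)
    also have "\<dots> = 1 - (\<Sum>xs\<in>B. pmf (Q i) xs * h xs)"
      using sum_pmf_eq_1[OF fB supp[OF ij(1)]] by simp
    finally show ?thesis .
  qed
  have to: "err_to q n l Q D j i = (\<Sum>xs\<in>B. pmf (Q j) xs * h xs)"
    unfolding err_to_def h_def by (rule expectation_fin[OF fB supp[OF ij(2)]])
  have diff: "(\<Sum>t\<in>T. p i t * g t) - (\<Sum>t\<in>T. p j t * g t) \<le> real N / real K"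
  proof -
    have "(\<Sum>t\<in>T. p i t * g t) - (\<Sum>t\<in>T. p j t * g t) = (\<Sum>t\<in>T. (p i t - p j t) * g t)"
      by (simp add: sum_subtractf left_diff_distrib)
    also have "\<dots> \<le> (\<Sum>t\<in>T. 1 / real K)"
    proof (rule sum_mono)
      fix t assume t: "t \<in> T"
      have "(p i t - p j t) * g t \<le> \<bar>p i t - p j t\<bar> * g t"
        using g01[OF t] by (intro mult_right_mono) auto
      also have "\<dots> \<le> \<bar>p i t - p j t\<bar>" using g01[OF t] by (simp add: mult_left_le)
      also have "\<dots> \<le> 1 / real K" by (rule close[OF t])
      finally show "(p i t - p j t) * g t \<le> 1 / real K" .
    qed
    also have "\<dots> = real (card T) / real K" by simp
    also have "\<dots> \<le> real N / real K" using cT by (simp add: divide_right_mono)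
    finally show ?thesis .
  qed
  have "1 - real N / real K \<le> err_miss q n l Q D i + err_to q n l Q D j i"
    using miss to Eh[of i] Eh[of j] diff by simp
  also have "\<dots> \<le> lambda1 q n l M Q D + lambda2 q n l M Q D"
    using lambda1_ge[OF ij(1)] lambda2_ge[OF ij(2,1)] ij(3) by (intro add_mono) auto
  finally show ?thesis .
qed

lemma N_bound:
  fixes n l q :: nat and \<beta> :: real
  assumes "n \<ge> 1" "real l \<le> \<beta> * real n"
  shows "real ((n+1)^(l*(q-1))) \<le> exp (\<beta> * real (q-1)) * real n ^ (l*(q-1))"
proof -
  define e where "e = l*(q-1)"
  have np: "real n > 0" using assms by simp
  have h: "real n * (1 + 1/real n) = real n + 1" using np by (simp add: field_simps)
  have "real ((n+1)^e) = (real n * (1 + 1/real n))^e" unfolding h by (simp add: add.commute)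
  also have "\<dots> = real n ^ e * (1 + 1/real n)^e" by (simp add: power_mult_distrib)
  also have "(1 + 1/real n)^e \<le> exp (1/real n)^e"
    by (intro power_mono) (auto intro: exp_ge_add_one_self)
  also have "exp (1/real n)^e = exp (real e / real n)" by (simp add: exp_of_nat_mult[symmetric])
  also have "\<dots> \<le> exp (\<beta> * real (q-1))"
  proof -
    have "real l / real n \<le> \<beta>" using assms np by (simp add: field_simps)
    then have "real l / real n * real (q-1) \<le> \<beta> * real (q-1)" by (intro mult_right_mono) auto
    then show ?thesis unfolding e_def by (simp add: field_simps)
  qed
  finally show ?thesis unfolding e_def[symmetric] using np
    by (simp add: mult.commute mult_left_mono)
qed

theorem theorem2:
  fixes q :: nat and n l M :: "nat \<Rightarrow> nat" and R :: "nat \<Rightarrow> real" and \<beta> :: real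
    and Q :: "nat \<Rightarrow> nat \<Rightarrow> nat list list pmf" and D :: "nat \<Rightarrow> nat \<Rightarrow> nat list list set"
  assumes "q \<ge> 2"
    and "filterlim n at_top sequentially"
    and "filterlim R at_top sequentially"
    and "\<beta> > 0"
    and "\<And>i. l i > 0"
    and "\<And>i. real (l i) \<le> \<beta> * real (n i)"
    and "\<And>i. is_ID_code q (n i) (l i) (M i) (Q i) (D i)"
    and "\<And>i. real (M i) \<ge> 2 powr (R i * real (n i) ^ (l i * (q - 1)))"
  shows "Liminf sequentially
           (\<lambda>i. ereal (lambda1 q (n i) (l i) (M i) (Q i) (D i)
                      + lambda2 q (n i) (l i) (M i) (Q i) (D i))) \<ge> 1"
proof -
  have q1: "q \<ge> 1" using assms(1) by simp
  show ?thesis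
  proof (subst le_Liminf_iff, intro allI impI)
    fix y :: ereal assume y: "y < 1"
    show "eventually (\<lambda>i. y < ereal (lambda1 q (n i) (l i) (M i) (Q i) (D i)
                      + lambda2 q (n i) (l i) (M i) (Q i) (D i))) sequentially"
    proof (cases y)
      case MInf then show ?thesis by simp
    next
      case PInf then show ?thesis using y by simp
    next
      case (real r)
      then have r: "r < 1" using y by simp
      define \<epsilon> where "\<epsilon> = (1 - r) / 2"
      have \<epsilon>: "\<epsilon> > 0" using r \<epsilon>_def by simp
      define E where "E = exp (\<beta> * real (q-1))"
      define C where "C = E * (1 + 2/\<epsilon>) + 4"
      have ev1: "eventually (\<lambda>i. C < R i) sequentially"
        by (rule eventually_compose_filterlim[OF eventually_gt_at_top assms(3)])
      have ev2: "eventually (\<lambda>i. 1 \<le> n i) sequentially"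
        by (rule eventually_compose_filterlim[OF eventually_ge_at_top assms(2)])
      show ?thesis using ev1 ev2
      proof eventually_elim
        fix i assume Ri: "C < R i" and ni: "1 \<le> n i"
        define e where "e = l i * (q - 1)"
        define N where "N = (n i + 1)^e"
        define K where "K = nat \<lceil>real N / \<epsilon>\<rceil> + 1"
        have K0: "K > 0" unfolding K_def by simp
        have Kge: "real K \<ge> real N / \<epsilon>" unfolding K_def by linarith
        have Kle: "real K \<le> real N / \<epsilon> + 2"
        proof -
          have "real N / \<epsilon> \<ge> 0" using \<epsilon> by simp
          then show ?thesis unfolding K_def by linarith
        qed
        have NK: "real N / real K \<le> \<epsilon>"
          using Kge K0 \<epsilon> by (simp add: field_simps)
        define x where "x = real (n i) ^ e"
        have x1: "x \<ge> 1" unfolding x_def using ni by simp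
        have NE: "real N \<le> E * x"
          unfolding N_def E_def x_def e_def using N_bound[OF ni assms(6)[of i], of q] by simp
        have "real (N + 2*K) \<le> real N + 2 * (real N / \<epsilon> + 2)" using Kle by simp
        also have "\<dots> = real N * (1 + 2/\<epsilon>) + 4" by (simp add: field_simps)
        also have "\<dots> \<le> E * x * (1 + 2/\<epsilon>) + 4"
          using NE \<epsilon> by (intro add_right_mono mult_right_mono) auto
        also have "\<dots> \<le> C * x"
        proof -
          have "4 \<le> 4 * x" using x1 by simp
          then show ?thesis unfolding C_def by (simp add: algebra_simps)
        qed
        also have "\<dots> < R i * x" using Ri x1 by (intro mult_strict_right_mono) auto
        finally have lt: "real (N + 2*K) < R i * x" .
        have "real (2 ^ (N + 2*K)) = 2 powr real (N + 2*K)"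
          using powr_realpow[of 2 "N + 2*K"] by (simp only: of_nat_power) simp
        also have "\<dots> < 2 powr (R i * x)" using lt by simp
        also have "\<dots> \<le> real (M i)" using assms(8)[of i] unfolding x_def e_def by simp
        finally have big: "M i > 2 ^ (N + 2*K)" by (simp only: of_nat_less_iff)
        have "1 - \<epsilon> \<le> 1 - real N / real K" using NK by simp
        also have "\<dots> \<le> lambda1 q (n i) (l i) (M i) (Q i) (D i) + lambda2 q (n i) (l i) (M i) (Q i) (D i)"
          by (rule main_fin[OF q1 assms(7) K0 big]) (simp add: N_def e_def)
        finally have "1 - \<epsilon> \<le> lambda1 q (n i) (l i) (M i) (Q i) (D i) + lambda2 q (n i) (l i) (M i) (Q i) (D i)" .
        moreover have "r < 1 - \<epsilon>" using r \<epsilon>_def by simp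
        ultimately show "y < ereal (lambda1 q (n i) (l i) (M i) (Q i) (D i) + lambda2 q (n i) (l i) (M i) (Q i) (D i))"
          using real by simp
      qed
    qed
  qed
qed

end
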